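(* Let $k\ge2$, let $n$ be divisible by $k$, and consider the $n$-vertex bipartite construction with ratio $\rho$ and with parts $X,Y$ ($|X|=\rho n$), where all edges touching $X$ are red and all edges inside $Y$ are blue. Then: (1) writing $|Y|=qk+r$ with $0\le r<k$, the largest number of blue edges in a $K_k$-factor is $q\binom{k}{2}+\binom{r}{2}=\frac{k-1}{2}(1-\rho)n+O(1)$; (2) the largest number of red edges in a $K_k$-factor is $\left(\frac{k-1}{2}-\frac{k-\lfloor k\rho\rfloor-1}{2}\left(\frac{\lfloor k\rho\rfloor}{k}+1-2\rho\right)\right)n$.
   Context: A $K_k$-factor of $K_n$ ($k\mid n$) is a collection of $n/k$ vertex-disjoint copies of $K_k$ covering all vertices; its edges are the edges of these cliques. The bipartite construction with ratio $\rho$ is the red/blue-coloring of $K_n$ with vertex partition $X\cup Y$, $|X|=\rho n$, in which all edges touching $X$ get one color and all edges inside $Y$ get the other color. *)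

theory Defs
  imports Complex_Main
begin

text \<open>The complete graph on the finite vertex set V. A K_k-factor is a partition of V
  into blocks of exactly k vertices (each block spans a copy of K_k).\<close>
definition Kk_factor :: "nat \<Rightarrow> 'a set \<Rightarrow> 'a set set \<Rightarrow> bool" where
  "Kk_factor k V P \<longleftrightarrow>
     (\<forall>B\<in>P. B \<subseteq> V \<and> card B = k) \<and>
     (\<forall>B\<in>P. \<forall>C\<in>P. B \<noteq> C \<longrightarrow> B \<inter> C = {}) \<and>
     \<Union>P = V"

definition factor_edges :: "'a set set \<Rightarrow> 'a set set" where
  "factor_edges P = {{u, v} | u v. \<exists>B\<in>P. u \<in> B \<and> v \<in> B \<and> u \<noteq> v}"

text \<open>Bipartite construction with parts X and Y = V - X: an edge is red iff it touches X,
  blue iff it lies inside Y.\<close>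
definition red_edge :: "'a set \<Rightarrow> 'a set \<Rightarrow> bool" where
  "red_edge X e \<longleftrightarrow> e \<inter> X \<noteq> {}"

definition blue_edge :: "'a set \<Rightarrow> 'a set \<Rightarrow> bool" where
  "blue_edge X e \<longleftrightarrow> e \<inter> X = {}"

definition max_in_factor :: "nat \<Rightarrow> 'a set \<Rightarrow> ('a set \<Rightarrow> bool) \<Rightarrow> nat" where
  "max_in_factor k V c = Max {card {e \<in> factor_edges P. c e} | P. Kk_factor k V P}"

end

theory Submission imports Defs begin

lemma factor_finite: assumes "Kk_factor k V P" "finite V" shows "finite P"
proof -
  have "P \<subseteq> Pow V" using assms(1) unfolding Kk_factor_def by auto
  thus ?thesis using assms(2) finite_subset by blast
qed

lemma factor_count:
  assumes F: "Kk_factor k V P" and fin: "finite V"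
  shows "card {e \<in> factor_edges P. c e} = (\<Sum>B\<in>P. card {e. e \<subseteq> B \<and> card e = 2 \<and> c e})"
proof -
  have eq: "{e \<in> factor_edges P. c e} = (\<Union>B\<in>P. {e. e \<subseteq> B \<and> card e = 2 \<and> c e})"
  proof (rule set_eqI, rule iffI)
    fix e assume "e \<in> {e \<in> factor_edges P. c e}"
    then obtain u v B where "e = {u,v}" "B \<in> P" "u \<in> B" "v \<in> B" "u \<noteq> v" "c e"
      unfolding factor_edges_def by blast
    thus "e \<in> (\<Union>B\<in>P. {e. e \<subseteq> B \<and> card e = 2 \<and> c e})" by auto
  next
    fix e assume "e \<in> (\<Union>B\<in>P. {e. e \<subseteq> B \<and> card e = 2 \<and> c e})"
    then obtain B where B: "B \<in> P" "e \<subseteq> B" "card e = 2" "c e" by blast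
    then obtain u v where "e = {u,v}" "u \<noteq> v" by (meson card_2_iff)
    thus "e \<in> {e \<in> factor_edges P. c e}" using B unfolding factor_edges_def by blast
  qed
  have finP: "finite P" using factor_finite[OF F fin] .
  have finB: "\<forall>B\<in>P. finite {e. e \<subseteq> B \<and> card e = 2 \<and> c e}"
  proof
    fix B assume "B \<in> P"
    hence "finite B" using F fin unfolding Kk_factor_def by (meson finite_subset)
    thus "finite {e. e \<subseteq> B \<and> card e = 2 \<and> c e}" by auto
  qed
  have disj: "\<forall>B\<in>P. \<forall>C\<in>P. B \<noteq> C \<longrightarrow> {e. e \<subseteq> B \<and> card e = 2 \<and> c e} \<inter> {e. e \<subseteq> C \<and> card e = 2 \<and> c e} = {}"
  proof (intro ballI impI)
    fix B C assume "B \<in> P" "C \<in> P" "B \<noteq> C"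
    hence "B \<inter> C = {}" using F unfolding Kk_factor_def by blast
    thus "{e. e \<subseteq> B \<and> card e = 2 \<and> c e} \<inter> {e. e \<subseteq> C \<and> card e = 2 \<and> c e} = {}"
      by (auto simp: card_2_iff)
  qed
  show ?thesis unfolding eq by (rule card_UN_disjoint[OF finP finB disj])
qed

lemma blue_block: assumes "finite B"
  shows "card {e. e \<subseteq> B \<and> card e = 2 \<and> blue_edge X e} = card (B - X) choose 2"
proof -
  have "{e. e \<subseteq> B \<and> card e = 2 \<and> blue_edge X e} = {e. e \<subseteq> B - X \<and> card e = 2}"
    unfolding blue_edge_def by auto
  thus ?thesis using n_subsets[of "B - X" 2] assms by simp
qed

lemma red_block: assumes "finite B"
  shows "card {e. e \<subseteq> B \<and> card e = 2 \<and> red_edge X e} = (card B choose 2) - (card (B - X) choose 2)"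
proof -
  have "{e. e \<subseteq> B \<and> card e = 2 \<and> red_edge X e} = {e. e \<subseteq> B \<and> card e = 2} - {e. e \<subseteq> B - X \<and> card e = 2}"
    unfolding red_edge_def by auto
  moreover have "{e. e \<subseteq> B - X \<and> card e = 2} \<subseteq> {e. e \<subseteq> B \<and> card e = 2}" by auto
  moreover have "finite {e. e \<subseteq> B - X \<and> card e = 2}" using assms by auto
  ultimately show ?thesis using n_subsets[of "B - X" 2] n_subsets[of B 2] assms by (simp add: card_Diff_subset)
qed

lemma factor_card:
  assumes F: "Kk_factor k V P" and fin: "finite V"
  shows "card P * k = card V"
proof -
  have "card V = card (\<Union>P)" using F unfolding Kk_factor_def by simp
  also have "\<dots> = sum card P"
    apply (rule card_Union_disjoint)
    using F fin unfolding Kk_factor_def pairwise_def disjnt_def by (auto intro: finite_subset)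
  also have "\<dots> = card P * k" using F unfolding Kk_factor_def by simp
  finally show ?thesis by simp
qed

lemma factor_sumY:
  assumes F: "Kk_factor k V P" and fin: "finite V"
  shows "(\<Sum>B\<in>P. card (B - X)) = card (V - X)"
proof -
  have "V - X = (\<Union>B\<in>P. B - X)" using F unfolding Kk_factor_def by auto
  hence "card (V - X) = card (\<Union>B\<in>P. B - X)" by simp
  also have "\<dots> = (\<Sum>B\<in>P. card (B - X))"
  proof (rule card_UN_disjoint[OF factor_finite[OF F fin]])
    show "\<forall>B\<in>P. finite (B - X)" using F fin unfolding Kk_factor_def by (auto intro: finite_subset)
    show "\<forall>B\<in>P. \<forall>C\<in>P. B \<noteq> C \<longrightarrow> (B - X) \<inter> (C - X) = {}"
    proof (intro ballI impI)
      fix B C assume "B \<in> P" "C \<in> P" "B \<noteq> C"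
      hence "B \<inter> C = {}" using F unfolding Kk_factor_def by blast
      thus "(B - X) \<inter> (C - X) = {}" by blast
    qed
  qed
  finally show ?thesis by simp
qed

lemma sum_list_le_len: "\<forall>b\<in>set bs. b \<le> (k::nat) \<Longrightarrow> sum_list bs \<le> length bs * k"
  by (induction bs) auto

lemma construct:
  assumes k: "k \<ge> 1"
  shows "finite V \<Longrightarrow> X \<subseteq> V \<Longrightarrow> length bs * k = card V \<Longrightarrow> sum_list bs = card (V - X)
     \<Longrightarrow> \<forall>b\<in>set bs. b \<le> k
     \<Longrightarrow> \<exists>P. Kk_factor k V P \<and> (\<Sum>B\<in>P. f (card (B - X))) = sum_list (map f bs)"
proof (induction bs arbitrary: V X)
  case Nil
  hence "V = {}" by simp
  thus ?case by (intro exI[of _ "{}"]) (simp add: Kk_factor_def)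
next
  case (Cons b bs)
  have finVX: "finite (V - X)" using Cons.prems by auto
  have "b \<le> card (V - X)" using Cons.prems(4) by simp
  then obtain Y0 where Y0: "Y0 \<subseteq> V - X" "card Y0 = b" "finite Y0" by (meson obtain_subset_with_card_n)
  have cXle: "card X \<le> card V" using Cons.prems(1,2) by (simp add: card_mono)
  have cX: "card X = card V - card (V - X)" using Cons.prems(1,2) cXle
    by (simp add: card_Diff_subset finite_subset)
  have "sum_list bs \<le> length bs * k" using sum_list_le_len Cons.prems(5) by simp
  hence "k - b \<le> card X" using cX Cons.prems(3,4) by simp
  then obtain X0 where X0: "X0 \<subseteq> X" "card X0 = k - b" "finite X0" by (meson obtain_subset_with_card_n)
  define B0 where "B0 = X0 \<union> Y0"
  have "X0 \<inter> Y0 = {}" using X0 Y0 by blast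
  hence cB0: "card B0 = k" unfolding B0_def using X0 Y0 Cons.prems(5) card_Un_disjoint by fastforce
  have B0V: "B0 \<subseteq> V" unfolding B0_def using X0 Y0 Cons.prems(2) by blast
  define V' where "V' = V - B0"
  define X' where "X' = X - X0"
  have "finite V'" "X' \<subseteq> V'" using Cons.prems(1,2) Y0 unfolding V'_def X'_def B0_def by auto
  moreover have "length bs * k = card V'" unfolding V'_def
    using Cons.prems(3) cB0 B0V Cons.prems(1) by (simp add: card_Diff_subset finite_subset)
  moreover have "V' - X' = (V - X) - Y0" unfolding V'_def X'_def B0_def using X0 by blast
  hence "sum_list bs = card (V' - X')" using Cons.prems(4) Y0 by (simp add: card_Diff_subset)
  moreover have "\<forall>b\<in>set bs. b \<le> k" using Cons.prems(5) by simp
  ultimately obtain P' where P': "Kk_factor k V' P'" "(\<Sum>B\<in>P'. f (card (B - X'))) = sum_list (map f bs)"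
    using Cons.IH by blast
  have P'sub: "\<forall>B\<in>P'. B \<subseteq> V'" using P'(1) unfolding Kk_factor_def by blast
  have "B0 \<noteq> {}" using cB0 k by auto
  hence notin: "B0 \<notin> P'" using P'sub unfolding V'_def by blast
  have "Kk_factor k V (insert B0 P')"
    unfolding Kk_factor_def
  proof (intro conjI)
    show "\<forall>B\<in>insert B0 P'. B \<subseteq> V \<and> card B = k"
      using P'(1) B0V cB0 unfolding Kk_factor_def V'_def by auto
    have "\<forall>B\<in>P'. B \<inter> B0 = {}" using P'sub unfolding V'_def by auto
    then show "\<forall>B\<in>insert B0 P'. \<forall>C\<in>insert B0 P'. B \<noteq> C \<longrightarrow> B \<inter> C = {}"
      using P'(1) unfolding Kk_factor_def by (simp add: Int_commute)
    have "\<Union>P' = V'" using P'(1) unfolding Kk_factor_def by simp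
    then show "\<Union>(insert B0 P') = V" using B0V unfolding V'_def by auto
  qed
  moreover have "(\<Sum>B\<in>insert B0 P'. f (card (B - X))) = sum_list (map f (b # bs))"
  proof -
    have "(\<Sum>B\<in>insert B0 P'. f (card (B - X))) = f (card (B0 - X)) + (\<Sum>B\<in>P'. f (card (B - X)))"
      using notin factor_finite[OF P'(1) \<open>finite V'\<close>] by simp
    moreover have "B0 - X = Y0" unfolding B0_def using X0 Y0 by blast
    moreover have "(\<Sum>B\<in>P'. f (card (B - X))) = (\<Sum>B\<in>P'. f (card (B - X')))"
    proof (rule sum.cong)
      fix B assume "B \<in> P'"
      hence "B - X = B - X'" using P'sub unfolding V'_def X'_def B0_def by blast
      thus "f (card (B - X)) = f (card (B - X'))" by simp
    qed simp
    ultimately show ?thesis using P'(2) Y0 by simp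
  qed
  ultimately show ?case by blast
qed

lemma choose2_real: "real (b choose 2) = real b * (real b - 1) / 2"
proof (induction b)
  case (Suc b)
  have "Suc b choose 2 = b + (b choose 2)"
    by (simp add: numeral_2_eq_2)
  thus ?case using Suc by (simp add: field_simps)
qed simp

lemma tangent:
  fixes b :: nat and c :: int
  shows "real (b choose 2) \<ge> real_of_int c * (real_of_int c - 1) / 2 + real_of_int c * (real b - real_of_int c)"
proof -
  define z where "z = int b - c"
  have "z * (z - 1) \<ge> 0"
    by (cases "z \<le> 0") (auto intro: mult_nonpos_nonpos)
  hence "real_of_int z * (real_of_int z - 1) \<ge> 0"
    by (metis of_int_0_le_iff of_int_1 of_int_diff of_int_mult)
  moreover have "real_of_int z = real b - real_of_int c" unfolding z_def by simp
  moreover have "real (b choose 2) - (real_of_int c * (real_of_int c - 1) / 2 + real_of_int c * (real b - real_of_int c))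
     = (real b - real_of_int c) * ((real b - real_of_int c) - 1) / 2"
    unfolding choose2_real by (simp add: field_simps)
  ultimately show ?thesis by simp
qed

definition gg :: "nat \<Rightarrow> nat \<Rightarrow> nat" where
  "gg k y = (y div k) * (k choose 2) + ((y mod k) choose 2)"

lemma divmod_form: assumes "s < (k::nat)" shows "(q * k + s) div k = q" "(q * k + s) mod k = s"
  using assms by simp_all

lemma gg_step:
  assumes k: "k \<ge> 1" and b: "b \<le> k"
  shows "gg k y + (b choose 2) \<le> gg k (y + b)"
proof -
  define q where "q = y div k"
  define r where "r = y mod k"
  have y: "y = q * k + r" and r: "r < k" unfolding q_def r_def using k by auto
  show ?thesis
  proof (cases "r + b < k")
    case True
    have yb: "y + b = q * k + (r + b)" using y by simp
    have "real (r choose 2) + real (b choose 2) \<le> real ((r + b) choose 2)"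
      unfolding choose2_real by (simp add: field_simps)
    hence "(r choose 2) + (b choose 2) \<le> ((r + b) choose 2)" by linarith
    thus ?thesis unfolding gg_def yb divmod_form[OF True] using y divmod_form[OF r] by simp
  next
    case False
    define d where "d = r + b - k"
    have d: "d < k" unfolding d_def using r b by simp
    have yb: "y + b = (q + 1) * k + d" using y False unfolding d_def by simp
    have "real (r choose 2) + real (b choose 2) \<le> real (k choose 2) + real (d choose 2)"
    proof -
      have dr: "real d = real r + real b - real k" using False unfolding d_def by simp
      have "(real k - real r) * (real k - real b) \<ge> 0" using r b by simp
      moreover have "real (k choose 2) + real (d choose 2) - real (r choose 2) - real (b choose 2) = (real k - real r) * (real k - real b)"
        unfolding choose2_real dr by (simp add: field_simps)
      ultimately show ?thesis by linarith
    qed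
    hence "(r choose 2) + (b choose 2) \<le> (k choose 2) + (d choose 2)" by linarith
    thus ?thesis unfolding gg_def yb divmod_form[OF d] using y divmod_form[OF r] by simp
  qed
qed

lemma gg_sum:
  assumes k: "k \<ge> 1" and fin: "finite S"
  shows "(\<forall>i\<in>S. b i \<le> k) \<Longrightarrow> (\<Sum>i\<in>S. b i choose 2) \<le> gg k (\<Sum>i\<in>S. b i)"
  using fin
proof (induction S rule: finite_induct)
  case empty
  then show ?case by (simp add: gg_def)
next
  case (insert i S)
  have "(\<Sum>i\<in>insert i S. b i choose 2) = (b i choose 2) + (\<Sum>i\<in>S. b i choose 2)" using insert by simp
  also have "\<dots> \<le> (b i choose 2) + gg k (\<Sum>i\<in>S. b i)" using insert by simp
  also have "\<dots> \<le> gg k ((\<Sum>i\<in>S. b i) + b i)" using gg_step[OF k, of "b i" "\<Sum>i\<in>S. b i"] insert.prems by simp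
  finally show ?case using insert by (simp add: add.commute)
qed

lemma zero_choose2[simp]: "(0::nat) choose 2 = 0" by (simp add: numeral_2_eq_2)

lemma blue_count:
  assumes F: "Kk_factor k V P" and fin: "finite V"
  shows "card {e \<in> factor_edges P. blue_edge X e} = (\<Sum>B\<in>P. card (B - X) choose 2)"
proof -
  have "card {e \<in> factor_edges P. blue_edge X e} = (\<Sum>B\<in>P. card {e. e \<subseteq> B \<and> card e = 2 \<and> blue_edge X e})"
    by (rule factor_count[OF F fin])
  also have "\<dots> = (\<Sum>B\<in>P. card (B - X) choose 2)"
  proof (rule sum.cong)
    fix B assume "B \<in> P"
    hence "finite B" using F fin unfolding Kk_factor_def by (meson finite_subset)
    thus "card {e. e \<subseteq> B \<and> card e = 2 \<and> blue_edge X e} = card (B - X) choose 2" by (rule blue_block)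
  qed simp
  finally show ?thesis .
qed

lemma blockY_le:
  assumes F: "Kk_factor k V P" and fin: "finite V" and B: "B \<in> P"
  shows "card (B - X) \<le> k"
proof -
  have "finite B" "card B = k" using F fin B unfolding Kk_factor_def by (meson finite_subset)+
  thus ?thesis by (metis Diff_subset card_mono)
qed

lemma blue_max:
  assumes k: "k \<ge> 2" and fin: "finite V" and dv: "k dvd card V" and XV: "X \<subseteq> V"
  shows "max_in_factor k V (blue_edge X) = gg k (card (V - X))"
proof -
  have k1: "k \<ge> 1" using k by simp
  define S where "S = {card {e \<in> factor_edges P. blue_edge X e} | P. Kk_factor k V P}"
  define y where "y = card (V - X)"
  define m where "m = card V div k"
  have n: "card V = m * k" unfolding m_def using dv by simp
  have ub: "s \<le> gg k y" if "s \<in> S" for s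
  proof -
    obtain P where P: "Kk_factor k V P" "s = card {e \<in> factor_edges P. blue_edge X e}"
      using \<open>s \<in> S\<close> unfolding S_def by blast
    have "s = (\<Sum>B\<in>P. card (B - X) choose 2)" using blue_count[OF P(1) fin] P(2) by simp
    also have "\<dots> \<le> gg k (\<Sum>B\<in>P. card (B - X))"
      using gg_sum[OF k1 factor_finite[OF P(1) fin], of "\<lambda>B. card (B - X)"] blockY_le[OF P(1) fin] by blast
    also have "\<dots> = gg k y" using factor_sumY[OF P(1) fin] unfolding y_def by simp
    finally show ?thesis .
  qed
  define q where "q = y div k"
  define r where "r = y mod k"
  have yqr: "y = q * k + r" "r < k" unfolding q_def r_def using k by auto
  have "y \<le> card V" unfolding y_def using fin by (simp add: card_mono)
  hence yle: "q * k + r \<le> m * k" using yqr n by simp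
  obtain bs where bs: "length bs * k = card V" "sum_list bs = y" "\<forall>b\<in>set bs. b \<le> k"
     "sum_list (map (\<lambda>b. b choose 2) bs) = gg k y"
  proof (cases "r = 0")
    case True
    hence "q \<le> m" using yle k by simp
    show ?thesis
      apply (rule that[of "replicate q k @ replicate (m - q) 0"])
      using True \<open>q \<le> m\<close> yqr n unfolding gg_def q_def[symmetric] r_def[symmetric]
      by (auto simp: sum_list_replicate algebra_simps)
  next
    case False
    hence "q * k < m * k" using yle by linarith
    hence "q < m" by (meson mult_less_cancel2)
    show ?thesis
      apply (rule that[of "replicate q k @ r # replicate (m - q - 1) 0"])
      using False \<open>q < m\<close> yqr n unfolding gg_def q_def[symmetric] r_def[symmetric]
      by (auto simp: sum_list_replicate algebra_simps)
  qed
  obtain P where P: "Kk_factor k V P" "(\<Sum>B\<in>P. card (B - X) choose 2) = sum_list (map (\<lambda>b. b choose 2) bs)"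
    using construct[OF k1 fin XV bs(1) _ bs(3), of "\<lambda>b. b choose 2"] bs(2) unfolding y_def by blast
  have "gg k y = card {e \<in> factor_edges P. blue_edge X e}" using P bs(4) blue_count[OF P(1) fin, of X] by simp
  hence mem: "gg k y \<in> S" unfolding S_def using P(1) by blast
  have finS: "finite S" using ub finite_nat_set_iff_bounded_le by blast
  have "Max S = gg k y" by (rule Max_eqI[OF finS ub mem])
  thus ?thesis unfolding max_in_factor_def S_def y_def by simp
qed


lemma red_count_real:
  assumes F: "Kk_factor k V P" and fin: "finite V"
  shows "real (card {e \<in> factor_edges P. red_edge X e}) = (\<Sum>B\<in>P. real (k choose 2) - real (card (B - X) choose 2))"
proof -
  have "card {e \<in> factor_edges P. red_edge X e} = (\<Sum>B\<in>P. card {e. e \<subseteq> B \<and> card e = 2 \<and> red_edge X e})"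
    by (rule factor_count[OF F fin])
  also have "\<dots> = (\<Sum>B\<in>P. (k choose 2) - (card (B - X) choose 2))"
  proof (rule sum.cong)
    fix B assume "B \<in> P"
    hence "finite B" "card B = k" using F fin unfolding Kk_factor_def by (meson finite_subset)+
    thus "card {e. e \<subseteq> B \<and> card e = 2 \<and> red_edge X e} = (k choose 2) - (card (B - X) choose 2)"
      using red_block by metis
  qed simp
  finally have "real (card {e \<in> factor_edges P. red_edge X e}) = (\<Sum>B\<in>P. real ((k choose 2) - (card (B - X) choose 2)))"
    by simp
  also have "\<dots> = (\<Sum>B\<in>P. real (k choose 2) - real (card (B - X) choose 2))"
  proof (rule sum.cong)
    fix B assume "B \<in> P"
    hence "card (B - X) choose 2 \<le> k choose 2" using blockY_le[OF F fin] binomial_right_mono by blast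
    thus "real ((k choose 2) - (card (B - X) choose 2)) = real (k choose 2) - real (card (B - X) choose 2)"
      by (simp add: of_nat_diff)
  qed simp
  finally show ?thesis .
qed

lemma red_max:
  assumes k: "k \<ge> 2" and fin: "finite V" and dv: "k dvd card V" and XV: "X \<subseteq> V"
    and rho: "real (card X) = \<rho> * real (card V)"
  shows "real (max_in_factor k V (red_edge X))
                = ((real k - 1) / 2
                   - (real k - real_of_int \<lfloor>real k * \<rho>\<rfloor> - 1) / 2
                     * (real_of_int \<lfloor>real k * \<rho>\<rfloor> / real k + 1 - 2 * \<rho>)) * real (card V)"
proof -
  have k1: "k \<ge> 1" using k by simp
  define S where "S = {card {e \<in> factor_edges P. red_edge X e} | P. Kk_factor k V P}"
  define y where "y = card (V - X)"
  define x where "x = card X"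
  define m where "m = card V div k"
  have n: "card V = m * k" unfolding m_def using dv by simp
  have xle: "x \<le> card V" unfolding x_def using fin XV by (simp add: card_mono)
  have yx: "real y = real (card V) - real x" unfolding y_def x_def using fin XV
    by (simp add: card_Diff_subset finite_subset card_mono of_nat_diff)
  show ?thesis
  proof (cases "m = 0")
    case True
    hence V0: "V = {}" using n fin by simp
    have "S = {0}"
    proof -
      have "P = {}" if "Kk_factor k V P" for P
      proof -
        have "card P * k = 0" using factor_card[OF that fin] V0 by simp
        hence "card P = 0" using k by simp
        thus ?thesis using factor_finite[OF that fin] by simp
      qed
      hence hP: "\<And>P. Kk_factor k V P \<Longrightarrow> P = {}" .
      have hK: "Kk_factor k V {}" using V0 by (simp add: Kk_factor_def)
      have fe: "factor_edges ({}::'a set set) = {}" by (simp add: factor_edges_def)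
      have "\<forall>sv\<in>S. sv = 0"
      proof
        fix sv assume "sv \<in> S"
        then obtain P where P: "Kk_factor k V P" "sv = card {e \<in> factor_edges P. red_edge X e}" unfolding S_def by blast
        have "P = {}" using hP P(1) by blast
        thus "sv = 0" using P(2) fe by simp
      qed
      moreover have "0 = card {e \<in> factor_edges ({}::'a set set). red_edge X e}" using fe by simp
      hence "0 \<in> S" unfolding S_def using hK by blast
      ultimately show ?thesis by blast
    qed
    thus ?thesis unfolding max_in_factor_def S_def[symmetric] using V0 by simp
  next
    case False
    hence mpos: "m > 0" by simp
    define t where "t = x div m"
    define s where "s = x mod m"
    have xts: "x = m * t + s" "s < m" unfolding t_def s_def using mpos by auto
    have "x div m \<le> (m * k) div m" by (rule div_le_mono) (use xle n in simp)
    hence tk: "t \<le> k" unfolding t_def using mpos by simp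
    have stk: "s > 0 \<Longrightarrow> t < k"
    proof -
      assume "s > 0"
      hence "m * t < m * k" using xts(1) xle n by linarith
      thus "t < k" by simp
    qed
    have rho_eq: "\<rho> = real x / real (card V)" using rho mpos n k unfolding x_def by simp
    have fl: "\<lfloor>real k * \<rho>\<rfloor> = int t"
    proof -
      have "real k * \<rho> = real x / real m" unfolding rho_eq n using k by (simp add: field_simps)
      thus ?thesis unfolding t_def by (simp add: floor_divide_of_nat_eq)
    qed
    define c :: int where "c = int k - int t - 1"
    define K where "K = real (k choose 2)"
    define R where "R = ((real k - 1) / 2
                   - (real k - real_of_int \<lfloor>real k * \<rho>\<rfloor> - 1) / 2
                     * (real_of_int \<lfloor>real k * \<rho>\<rfloor> / real k + 1 - 2 * \<rho>)) * real (card V)"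
    define E where "E = real m * (K - real_of_int c * (real_of_int c - 1) / 2 + real_of_int c * real_of_int c) - real_of_int c * real y"
    have ER: "E = R"
    proof -
      have rx: "\<rho> * real (card V) = real x" using rho unfolding x_def by simp
      have h1: "(real t / real k + 1 - 2 * \<rho>) * real (card V) = real t * real m + real m * real k - 2 * real x"
        using rx n k by (simp add: field_simps)
      have "R = (real k - 1) / 2 * real (card V) - (real k - real t - 1) / 2 * ((real t / real k + 1 - 2 * \<rho>) * real (card V))"
        unfolding R_def fl by (simp only: of_int_of_nat_eq left_diff_distrib mult.assoc)
      hence "R = real m * real k * (real k - 1) / 2 - (real k - real t - 1) / 2 * (real t * real m + real m * real k - 2 * real x)"
        unfolding h1 using n by simp
      moreover have "E = real m * (real k * (real k - 1) / 2 - (real k - real t - 1) * (real k - real t - 2) / 2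
          + (real k - real t - 1) * (real k - real t - 1)) - (real k - real t - 1) * (real m * real k - real x)"
        unfolding E_def K_def c_def choose2_real yx n by simp
      ultimately show ?thesis by (simp add: field_simps)
    qed
    have ub: "real sv \<le> R" if "sv \<in> S" for sv
    proof -
      obtain P where P: "Kk_factor k V P" "sv = card {e \<in> factor_edges P. red_edge X e}"
        using \<open>sv \<in> S\<close> unfolding S_def by blast
      have cP: "card P = m" using factor_card[OF P(1) fin] n k by simp
      have "real sv = (\<Sum>B\<in>P. K - real (card (B - X) choose 2))"
        using red_count_real[OF P(1) fin] P(2) unfolding K_def by simp
      also have "\<dots> \<le> (\<Sum>B\<in>P. K - (real_of_int c * (real_of_int c - 1) / 2 + real_of_int c * (real (card (B - X)) - real_of_int c)))"
      proof (rule sum_mono)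
        fix B assume "B \<in> P"
        show "K - real (card (B - X) choose 2) \<le> K - (real_of_int c * (real_of_int c - 1) / 2 + real_of_int c * (real (card (B - X)) - real_of_int c))"
          using tangent[of c "card (B - X)"] by linarith
      qed
      also have "\<dots> = real (card P) * (K - real_of_int c * (real_of_int c - 1) / 2 + real_of_int c * real_of_int c)
          - real_of_int c * (\<Sum>B\<in>P. real (card (B - X)))"
        by (simp add: sum_subtractf sum_distrib_left algebra_simps sum.distrib)
      also have "(\<Sum>B\<in>P. real (card (B - X))) = real y"
        using factor_sumY[OF P(1) fin] unfolding y_def by (metis of_nat_sum)
      finally show ?thesis using ER cP unfolding E_def by simp
    qed
    define f where "f = (\<lambda>b::nat. (k choose 2) - (b choose 2))"
    define bs where "bs = replicate s (k - t - 1) @ replicate (m - s) (k - t)"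
    have bs1: "length bs * k = card V" unfolding bs_def using xts n by simp
    have bs3: "\<forall>b\<in>set bs. b \<le> k" unfolding bs_def by auto
    have bsum: "real (sum_list bs) = real s * real (k - t - 1) + real (m - s) * real (k - t)"
      unfolding bs_def by (simp add: sum_list_replicate)
    have bs2: "sum_list bs = y"
    proof -
      have "real (sum_list bs) = real y"
      proof (cases "s = 0")
        case True
        thus ?thesis using bsum yx n xts tk by (simp add: of_nat_diff algebra_simps)
      next
        case False
        thus ?thesis using bsum yx n xts tk stk by (simp add: of_nat_diff algebra_simps)
      qed
      thus ?thesis by (simp only: of_nat_eq_iff)
    qed
    obtain P where P: "Kk_factor k V P" "(\<Sum>B\<in>P. f (card (B - X))) = sum_list (map f bs)"
      using construct[OF k1 fin XV bs1 _ bs3, of f] bs2 unfolding y_def by blast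
    define v where "v = sum_list (map f bs)"
    have vS: "v \<in> S"
    proof -
      have "card {e \<in> factor_edges P. red_edge X e} = (\<Sum>B\<in>P. card {e. e \<subseteq> B \<and> card e = 2 \<and> red_edge X e})"
        by (rule factor_count[OF P(1) fin])
      also have "\<dots> = (\<Sum>B\<in>P. f (card (B - X)))"
      proof (rule sum.cong)
        fix B assume "B \<in> P"
        hence "finite B" "card B = k" using P(1) fin unfolding Kk_factor_def by (meson finite_subset)+
        thus "card {e. e \<subseteq> B \<and> card e = 2 \<and> red_edge X e} = f (card (B - X))"
          unfolding f_def using red_block by metis
      qed simp
      finally have "v = card {e \<in> factor_edges P. red_edge X e}" using P(2) unfolding v_def by simp
      thus ?thesis unfolding S_def using P(1) by blast
    qed
    have fr: "real (f b) = K - real b * (real b - 1) / 2" if "b \<le> k" for b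
      using that by (simp add: f_def K_def of_nat_diff binomial_right_mono choose2_real)
    have v1: "real v = real s * real (f (k - t - 1)) + real (m - s) * real (f (k - t))"
      unfolding v_def bs_def by (simp add: sum_list_replicate)
    have vE: "real v = E"
    proof (cases "s = 0")
      case True
      have "real (k - t) = real k - real t" using tk by simp
      hence "real v = real m * (K - (real k - real t) * (real k - real t - 1) / 2)"
        using v1 True fr[of "k - t"] by simp
      moreover have "E = real m * (K - (real k - real t - 1) * (real k - real t - 2) / 2 + (real k - real t - 1) * (real k - real t - 1))
          - (real k - real t - 1) * (real m * real k - real m * real t)"
        unfolding E_def c_def yx n xts True by simp
      ultimately show ?thesis by (simp add: field_simps)
    next
      case False
      have tk': "t < k" using stk False by simp
      have e1: "real (k - t) = real k - real t" using tk by simp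
      have e2: "real (k - t - 1) = real k - real t - 1" using tk' by simp
      have e3: "real (m - s) = real m - real s" using xts by simp
      have "real v = real s * (K - (real k - real t - 1) * (real k - real t - 1 - 1) / 2)
          + (real m - real s) * (K - (real k - real t) * (real k - real t - 1) / 2)"
        using v1 fr[of "k - t"] fr[of "k - t - 1"] e1 e2 e3 by simp
      moreover have "E = real m * (K - (real k - real t - 1) * (real k - real t - 2) / 2 + (real k - real t - 1) * (real k - real t - 1))
          - (real k - real t - 1) * (real m * real k - (real m * real t + real s))"
        unfolding E_def c_def yx n xts by simp
      ultimately show ?thesis by (simp add: field_simps)
    qed
    have vR: "real v = R" using vE ER by simp
    have ubv: "\<forall>sv\<in>S. sv \<le> v" using ub vR by fastforce
    have finS: "finite S" using ubv finite_nat_set_iff_bounded_le by blast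
    have "Max S = v" by (rule Max_eqI[OF finS _ vS]) (use ubv in auto)
    thus ?thesis unfolding max_in_factor_def S_def[symmetric] R_def[symmetric] using vR by simp
  qed
qed


lemma gg_close:
  assumes k: "k \<ge> 1"
  shows "\<bar>real (gg k y) - (real k - 1) / 2 * real y\<bar> \<le> real k * real k"
proof -
  define q where "q = y div k"
  define r where "r = y mod k"
  have y: "y = q * k + r" and r: "r < k" unfolding q_def r_def using k by auto
  have g: "gg k y = q * (k choose 2) + (r choose 2)" unfolding gg_def q_def r_def by simp
  have eq: "real (gg k y) - (real k - 1) / 2 * real y = - (real r * (real k - real r) / 2)"
  proof -
    have "real y = real q * real k + real r" using y by simp
    thus ?thesis using g by (simp add: choose2_real field_simps)
  qed
  have a: "0 \<le> real r * (real k - real r)" using r by simp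
  have b: "real r * (real k - real r) \<le> real k * real k"
    by (rule mult_mono) (use r in auto)
  show ?thesis unfolding eq using a b by simp
qed

theorem lemma3p3:
  fixes k :: nat
  assumes "k \<ge> 2"
  shows "(\<forall>(V::'a set) X (\<rho>::real).
            finite V \<and> k dvd card V \<and> X \<subseteq> V \<and> real (card X) = \<rho> * real (card V) \<longrightarrow>
              max_in_factor k V (blue_edge X)
                = (card (V - X) div k) * (k choose 2) + ((card (V - X) mod k) choose 2)
            \<and> real (max_in_factor k V (red_edge X))
                = ((real k - 1) / 2
                   - (real k - real_of_int \<lfloor>real k * \<rho>\<rfloor> - 1) / 2
                     * (real_of_int \<lfloor>real k * \<rho>\<rfloor> / real k + 1 - 2 * \<rho>)) * real (card V))
         \<and> (\<exists>C::real. \<forall>(V::'a set) X (\<rho>::real).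
            finite V \<and> k dvd card V \<and> X \<subseteq> V \<and> real (card X) = \<rho> * real (card V) \<longrightarrow>
              \<bar>real (max_in_factor k V (blue_edge X)) - (real k - 1) / 2 * (1 - \<rho>) * real (card V)\<bar> \<le> C)"
proof (intro conjI)
  show "\<forall>(V::'a set) X (\<rho>::real).
            finite V \<and> k dvd card V \<and> X \<subseteq> V \<and> real (card X) = \<rho> * real (card V) \<longrightarrow>
              max_in_factor k V (blue_edge X)
                = (card (V - X) div k) * (k choose 2) + ((card (V - X) mod k) choose 2)
            \<and> real (max_in_factor k V (red_edge X))
                = ((real k - 1) / 2
                   - (real k - real_of_int \<lfloor>real k * \<rho>\<rfloor> - 1) / 2
                     * (real_of_int \<lfloor>real k * \<rho>\<rfloor> / real k + 1 - 2 * \<rho>)) * real (card V)"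
  proof (intro allI impI)
    fix V :: "'a set" and X and \<rho> :: real
    assume h: "finite V \<and> k dvd card V \<and> X \<subseteq> V \<and> real (card X) = \<rho> * real (card V)"
    show "max_in_factor k V (blue_edge X)
                = (card (V - X) div k) * (k choose 2) + ((card (V - X) mod k) choose 2)
            \<and> real (max_in_factor k V (red_edge X))
                = ((real k - 1) / 2
                   - (real k - real_of_int \<lfloor>real k * \<rho>\<rfloor> - 1) / 2
                     * (real_of_int \<lfloor>real k * \<rho>\<rfloor> / real k + 1 - 2 * \<rho>)) * real (card V)"
      using blue_max[OF assms, of V X] red_max[OF assms, of V X \<rho>] h unfolding gg_def by blast
  qed
  show "\<exists>C::real. \<forall>(V::'a set) X (\<rho>::real).
            finite V \<and> k dvd card V \<and> X \<subseteq> V \<and> real (card X) = \<rho> * real (card V) \<longrightarrow>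
              \<bar>real (max_in_factor k V (blue_edge X)) - (real k - 1) / 2 * (1 - \<rho>) * real (card V)\<bar> \<le> C"
  proof (intro exI allI impI)
    fix V :: "'a set" and X and \<rho> :: real
    assume h: "finite V \<and> k dvd card V \<and> X \<subseteq> V \<and> real (card X) = \<rho> * real (card V)"
    have bm: "max_in_factor k V (blue_edge X) = gg k (card (V - X))"
      using blue_max[OF assms, of V X] h by blast
    have fin: "finite V" and XV: "X \<subseteq> V" using h by auto
    have c1: "card (V - X) = card V - card X" using fin XV by (simp add: card_Diff_subset finite_subset)
    have "card X \<le> card V" using fin XV by (simp add: card_mono)
    hence "real (card (V - X)) = real (card V) - real (card X)" unfolding c1 by (simp add: of_nat_diff)
    hence yy: "(1 - \<rho>) * real (card V) = real (card (V - X))" using h by (simp add: algebra_simps)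
    have e: "(real k - 1) / 2 * (1 - \<rho>) * real (card V) = (real k - 1) / 2 * real (card (V - X))"
      using yy by (simp only: mult.assoc)
    show "\<bar>real (max_in_factor k V (blue_edge X)) - (real k - 1) / 2 * (1 - \<rho>) * real (card V)\<bar> \<le> real k * real k"
      unfolding bm e using gg_close[of k "card (V - X)"] assms by linarith
  qed
qed

end
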